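(* Let $k\ge1$ be an integer and $\alpha>\beta>0$. Then $$ \int_{-1}^1(1-x)^{\alpha+1}(1+x)^{\beta+1}W(x)\,dx=\frac{(\rho^2-\eta^2)(\rho^2-\sigma^2)}{\rho(\rho-1)}\,{\bf h}_k^2 . $$
   Context: $y=P_k^{(\alpha,\beta)}(x)$ is the Jacobi polynomial in the standard (Szegő) normalization, orthogonal on $[-1,1]$ with weight $(1-x)^\alpha(1+x)^\beta$, with squared norm ${\bf h}_k^2=\frac{2^{\alpha+\beta+1}\Gamma(k+\alpha+1)\Gamma(k+\beta+1)}{(2k+\alpha+\beta+1)\,k!\,\Gamma(k+\alpha+\beta+1)}$. Put $\eta=\alpha-\beta$, $\sigma=\alpha+\beta$, $\rho=2k+\alpha+\beta$, and $$W(x)=(\rho^2-\sigma^2)y^2-4(\eta+\sigma x)yy'+4(1-x^2)y'^2 .$$ *)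

theory Defs
  imports "HOL-Analysis.Analysis"
begin

text \<open>Jacobi polynomial in the standard (Szego) normalization:
  P_k^{(a,b)}(x) = sum_{s=0}^k binom(k+a, k-s) binom(k+b, s) ((x-1)/2)^s ((x+1)/2)^(k-s).\<close>
definition jacobiP :: "nat \<Rightarrow> real \<Rightarrow> real \<Rightarrow> real \<Rightarrow> real" where
  "jacobiP k a b x =
     (\<Sum>s\<le>k. ((real k + a) gchoose (k - s)) * ((real k + b) gchoose s)
              * ((x - 1) / 2) ^ s * ((x + 1) / 2) ^ (k - s))"

text \<open>Squared norm h_k^2 of P_k^{(a,b)}.\<close>
definition jacobi_hsq :: "nat \<Rightarrow> real \<Rightarrow> real \<Rightarrow> real" where
  "jacobi_hsq k a b =
     2 powr (a + b + 1) * Gamma (real k + a + 1) * Gamma (real k + b + 1)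
     / ((2 * real k + a + b + 1) * fact k * Gamma (real k + a + b + 1))"

definition jacobiW :: "nat \<Rightarrow> real \<Rightarrow> real \<Rightarrow> real \<Rightarrow> real" where
  "jacobiW k a b x =
     (let y = jacobiP k a b x; y' = deriv (jacobiP k a b) x;
          \<eta> = a - b; \<sigma> = a + b; \<rho> = 2 * real k + a + b
      in (\<rho>^2 - \<sigma>^2) * y^2 - 4 * (\<eta> + \<sigma> * x) * y * y' + 4 * (1 - x^2) * y'^2)"

end

theory Submission
  imports Defs
begin

lemma alt_sum_Suc:
  fixes f :: "nat \<Rightarrow> real"
  shows "(\<Sum>s\<le>Suc k. (-1)^s * real (Suc k choose s) * f s)
       = (\<Sum>s\<le>k. (-1)^s * real (k choose s) * (f s - f (Suc s)))"
proof -
  have A: "(\<Sum>s\<le>Suc k. (-1)^s * real (Suc k choose s) * f s)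
      = f 0 + (\<Sum>s\<le>k. (-1)^(Suc s) * real (Suc k choose Suc s) * f (Suc s))"
    by (subst sum.atMost_Suc_shift) simp
  have B: "(\<Sum>s\<le>k. (-1)^s * real (k choose s) * f s)
      = f 0 + (\<Sum>s\<le>k. (-1)^(Suc s) * real (k choose Suc s) * f (Suc s))"
  proof -
    have "(\<Sum>s\<le>k. (-1)^s * real (k choose s) * f s) = (\<Sum>s\<le>Suc k. (-1)^s * real (k choose s) * f s)"
      by simp
    also have "\<dots> = f 0 + (\<Sum>s\<le>k. (-1)^(Suc s) * real (k choose Suc s) * f (Suc s))"
      by (subst sum.atMost_Suc_shift) simp
    finally show ?thesis .
  qed
  have "(\<Sum>s\<le>k. (-1)^s * real (k choose s) * (f s - f (Suc s)))
     = (\<Sum>s\<le>k. (-1)^s * real (k choose s) * f s) + (\<Sum>s\<le>k. (-1)^(Suc s) * real (k choose s) * f (Suc s))"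
    by (simp add: sum.distrib[symmetric] algebra_simps)
  also have "\<dots> = f 0 + (\<Sum>s\<le>k. (-1)^(Suc s) * real (Suc k choose Suc s) * f (Suc s))"
    unfolding B by (simp add: sum.distrib[symmetric] algebra_simps)
  finally show ?thesis using A by simp
qed

lemma D_lemma:
  fixes a :: real
  assumes "j \<le> k"
  shows "(\<Sum>s\<le>k. (-1)^s * real (k choose s) * pochhammer (a + real s + 1) j)
        = (if j = k then (-1)^k * fact k else 0)"
  using assms
proof (induction k arbitrary: a j)
  case 0
  then show ?case by simp
next
  case (Suc k)
  show ?case
  proof (cases j)
    case 0
    have "(\<Sum>s\<le>Suc k. (-1)^s * real (Suc k choose s) * pochhammer (a + real s + 1) j)
       = (\<Sum>s\<le>k. (-1)^s * real (k choose s) * (pochhammer (a + real s + 1) j - pochhammer (a + real (Suc s) + 1) j))"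
      by (rule alt_sum_Suc)
    then show ?thesis using 0 by simp
  next
    case (Suc i)
    have eq: "pochhammer (a + real s + 1) j - pochhammer (a + real (Suc s) + 1) j
           = - real j * pochhammer ((a+1) + real s + 1) i" for s
    proof -
      define x where "x = a + real s + 1"
      have 1: "a + real (Suc s) + 1 = x + 1" "(a+1) + real s + 1 = x + 1" by (simp_all add: x_def)
      have "pochhammer x (Suc i) = x * pochhammer (x+1) i" by (rule pochhammer_rec)
      moreover have "pochhammer (x+1) (Suc i) = (x + 1 + real i) * pochhammer (x+1) i"
        by (rule pochhammer_rec')
      ultimately show ?thesis unfolding 1 x_def[symmetric] Suc by (simp add: algebra_simps)
    qed
    have "(\<Sum>s\<le>Suc k. (-1)^s * real (Suc k choose s) * pochhammer (a + real s + 1) j)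
        = (\<Sum>s\<le>k. (-1)^s * real (k choose s) * (- real j * pochhammer ((a+1) + real s + 1) i))"
      by (simp only: alt_sum_Suc eq)
    also have "\<dots> = - real j * (\<Sum>s\<le>k. (-1)^s * real (k choose s) * pochhammer ((a+1) + real s + 1) i)"
      by (simp add: sum_distrib_left algebra_simps)
    also have "\<dots> = - real j * (if i = k then (-1)^k * fact k else 0)"
      using Suc.prems \<open>j = Suc i\<close> by (subst Suc.IH) auto
    also have "\<dots> = (if j = Suc k then (-1)^(Suc k) * fact (Suc k) else 0)"
      using \<open>j = Suc i\<close> by (auto simp: algebra_simps)
    finally show ?thesis .
  qed
qed

definition jw :: "real \<Rightarrow> real \<Rightarrow> real \<Rightarrow> real" where
  "jw a b x = (1 - x) powr a * (1 + x) powr b"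

lemma powr_mult_pos: "0 \<le> (c::real) \<Longrightarrow> 0 \<le> d \<Longrightarrow> (c * d) powr e = c powr e * d powr e"
  by (rule powr_mult)

lemma beta_x:
  fixes p q :: real
  assumes "p > -1" "q > -1"
  shows "((\<lambda>x. ((1-x)/2) powr p * ((1+x)/2) powr q) has_integral 2 * Beta (p+1) (q+1)) {-1..1}"
proof -
  have "((\<lambda>t. t powr ((q+1) - 1) * (1-t) powr ((p+1)-1)) has_integral Beta (q+1) (p+1)) {0..1}"
    using assms by (intro has_integral_Beta_real) auto
  then have h: "((\<lambda>t. t powr q * (1-t) powr p) has_integral Beta (p+1) (q+1)) (cbox 0 1)"
    by (simp add: Beta_commute)
  have "((\<lambda>x. (\<lambda>t. t powr q * (1-t) powr p) ((1/2) *\<^sub>R x + 1/2)) has_integral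
         (Beta (p+1) (q+1) /\<^sub>R (1/2) ^ DIM(real))) (cbox ((0 - 1/2) /\<^sub>R (1/2)) ((1 - 1/2) /\<^sub>R (1/2)))"
    by (rule has_integral_affinity'[OF h]) simp
  moreover have "(\<lambda>x. (\<lambda>t. t powr q * (1-t) powr p) ((1/2) *\<^sub>R x + 1/2))
      = (\<lambda>x. ((1-x)/2) powr p * ((1+x)/2) powr q)"
    by (rule ext) (simp add: field_simps)
  ultimately show ?thesis by simp
qed

lemma mono_int:
  fixes a b :: real
  assumes "a > 0" "b > 0"
  shows "((\<lambda>x. jw a b x * ((1-x)/2)^i * ((1+x)/2)^j) has_integral
          2 powr (a+b+1) * Beta (a + real i + 1) (b + real j + 1)) {-1..1}"
proof -
  have h: "((\<lambda>x. 2 powr (a+b) * (((1-x)/2) powr (a + real i) * ((1+x)/2) powr (b + real j))) has_integral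
        2 powr (a+b) * (2 * Beta (a + real i + 1) (b + real j + 1))) {-1..1}"
    by (rule has_integral_mult_right, rule beta_x) (use assms in auto)
  have e: "2 powr (a+b) * (2 * Beta (a + real i + 1) (b + real j + 1))
         = 2 powr (a+b+1) * Beta (a + real i + 1) (b + real j + 1)"
    by (simp add: powr_add)
  have pt: "2 powr (a+b) * (((1-x)/2) powr (a + real i) * ((1+x)/2) powr (b + real j))
         = jw a b x * ((1-x)/2)^i * ((1+x)/2)^j" if "x \<in> {-1..1} - {-1,1}" for x
  proof -
    from that have x: "-1 < x" "x < 1" by auto
    have u: "(1-x) powr a = 2 powr a * ((1-x)/2) powr a"
    proof -
      have ee: "2 * ((1-x)/2) = 1-x" by simp
      have "(1-x) powr a = (2 * ((1-x)/2)) powr a" by (simp only: ee)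
      also have "\<dots> = 2 powr a * ((1-x)/2) powr a" by (rule powr_mult_pos) (use x in auto)
      finally show ?thesis .
    qed
    have v: "(1+x) powr b = 2 powr b * ((1+x)/2) powr b"
    proof -
      have ee: "2 * ((1+x)/2) = 1+x" by simp
      have "(1+x) powr b = (2 * ((1+x)/2)) powr b" by (simp only: ee)
      also have "\<dots> = 2 powr b * ((1+x)/2) powr b" by (rule powr_mult_pos) (use x in auto)
      finally show ?thesis .
    qed
    have u2: "((1-x)/2) powr (a + real i) = ((1-x)/2) powr a * ((1-x)/2)^i"
      using x by (simp add: powr_add powr_realpow)
    have v2: "((1+x)/2) powr (b + real j) = ((1+x)/2) powr b * ((1+x)/2)^j"
      using x by (simp add: powr_add powr_realpow)
    show ?thesis unfolding jw_def u v u2 v2 by (simp add: powr_add algebra_simps)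
  qed
  have "((\<lambda>x. jw a b x * ((1-x)/2)^i * ((1+x)/2)^j) has_integral
          2 powr (a+b+1) * Beta (a + real i + 1) (b + real j + 1)) {-1..1} \<longleftrightarrow>
        ((\<lambda>x. 2 powr (a+b) * (((1-x)/2) powr (a + real i) * ((1+x)/2) powr (b + real j))) has_integral
          2 powr (a+b+1) * Beta (a + real i + 1) (b + real j + 1)) {-1..1}"
    by (rule has_integral_spike_finite_eq[of "{-1,1}"]) (use pt in auto)
  then show ?thesis using h e by simp
qed

lemma pos_not_nonpos_Int: "(x::real) > 0 \<Longrightarrow> x \<notin> \<int>\<^sub>\<le>\<^sub>0"
  by (auto elim!: nonpos_Ints_cases)

lemma Gamma_pos_ne: "(x::real) > 0 \<Longrightarrow> Gamma x \<noteq> 0"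
  using Gamma_real_pos[of x] by linarith

lemma c_beta:
  fixes a b :: real
  assumes a: "a > 0" and b: "b > 0" and s: "s \<le> k"
  shows "((real k + a) gchoose (k - s)) * ((real k + b) gchoose s) * Beta (a + real (s + j) + 1) (b + real (k - s) + 1)
       = Gamma (real k + a + 1) * Gamma (real k + b + 1) / (fact k * Gamma (a + b + real k + real j + 2))
         * real (k choose s) * pochhammer (a + real s + 1) j"
proof -
  have g1: "(real k + a) gchoose (k - s) = Gamma (real k + a + 1) / (fact (k-s) * Gamma (a + real s + 1))"
  proof -
    have "(real k + a) gchoose (k - s) = Gamma (real k + a + 1) / (fact (k-s) * Gamma (real k + a - real (k - s) + 1))"
      by (rule gbinomial_Gamma) (rule pos_not_nonpos_Int, use a in simp)
    also have "real k + a - real (k - s) + 1 = a + real s + 1" using s by (simp add: of_nat_diff)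
    finally show ?thesis .
  qed
  have g2: "(real k + b) gchoose s = Gamma (real k + b + 1) / (fact s * Gamma (b + real (k - s) + 1))"
  proof -
    have "(real k + b) gchoose s = Gamma (real k + b + 1) / (fact s * Gamma (real k + b - real s + 1))"
      by (rule gbinomial_Gamma) (rule pos_not_nonpos_Int, use b in simp)
    also have "real k + b - real s + 1 = b + real (k - s) + 1" using s by (simp add: of_nat_diff)
    finally show ?thesis .
  qed
  have B: "Beta (a + real (s + j) + 1) (b + real (k - s) + 1)
        = Gamma (a + real s + 1 + real j) * Gamma (b + real (k - s) + 1) / Gamma (a + b + real k + real j + 2)"
  proof -
    have e1: "a + real (s + j) + 1 = a + real s + 1 + real j" by simp
    have e2: "a + real s + 1 + real j + (b + real (k - s) + 1) = a + b + real k + real j + 2"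
      using s by (simp add: of_nat_diff)
    show ?thesis by (simp only: Beta_def e1 e2)
  qed
  have P: "pochhammer (a + real s + 1) j = Gamma (a + real s + 1 + real j) / Gamma (a + real s + 1)"
    by (rule pochhammer_Gamma) (rule pos_not_nonpos_Int, use a in simp)
  have C: "real (k choose s) = fact k / (fact s * fact (k-s))"
    using s by (simp add: binomial_fact)
  have nz: "Gamma (a + real s + 1) \<noteq> 0" "Gamma (b + real (k - s) + 1) \<noteq> 0"
     "Gamma (a + b + real k + real j + 2) \<noteq> 0"
    using a b by (auto intro!: Gamma_pos_ne)
  show ?thesis unfolding g1 g2 B P C using nz by (simp add: field_simps)
qed

definition Ek :: "nat \<Rightarrow> real \<Rightarrow> real \<Rightarrow> real" where
  "Ek k a b = 2 powr (a+b+1) * Gamma (real k + a + 1) * Gamma (real k + b + 1) / Gamma (a + b + 2 * real k + 2)"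

lemma mom:
  fixes a b :: real
  assumes a: "a > 0" and b: "b > 0" and j: "j \<le> k"
  shows "((\<lambda>x. jw a b x * jacobiP k a b x * ((x-1)/2)^j) has_integral (if j = k then Ek k a b else 0)) {-1..1}"
proof -
  define c where "c s = ((real k + a) gchoose (k - s)) * ((real k + b) gchoose s)" for s
  have pt: "jw a b x * jacobiP k a b x * ((x-1)/2)^j
      = (\<Sum>s\<le>k. (c s * (-1)^(s+j)) * (jw a b x * ((1-x)/2)^(s+j) * ((1+x)/2)^(k-s)))" for x
  proof -
    have m: "((x-1)/2)^n = (-1)^n * ((1-x)/2)^n" for n
    proof -
      have e: "(x-1)/2 = - ((1-x)/2)" by (metis minus_diff_eq minus_divide_left)
      show ?thesis unfolding e by (rule power_minus)
    qed
    have "jw a b x * jacobiP k a b x * ((x-1)/2)^j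
        = (\<Sum>s\<le>k. jw a b x * (c s * ((x - 1) / 2) ^ s * ((x + 1) / 2) ^ (k - s)) * ((x-1)/2)^j)"
      unfolding jacobiP_def c_def sum_distrib_left sum_distrib_right ..
    also have "\<dots> = (\<Sum>s\<le>k. (c s * (-1)^(s+j)) * (jw a b x * ((1-x)/2)^(s+j) * ((1+x)/2)^(k-s)))"
    proof (rule sum.cong[OF refl])
      fix s
      show "jw a b x * (c s * ((x - 1) / 2) ^ s * ((x + 1) / 2) ^ (k - s)) * ((x-1)/2)^j
          = (c s * (-1)^(s+j)) * (jw a b x * ((1-x)/2)^(s+j) * ((1+x)/2)^(k-s))"
      proof -
        have xx: "x + 1 = 1 + x" by simp
        show ?thesis unfolding m power_add xx by (simp add: mult_ac)
      qed
    qed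
    finally show ?thesis .
  qed
  have hi: "((\<lambda>x. jw a b x * jacobiP k a b x * ((x-1)/2)^j) has_integral
      (\<Sum>s\<le>k. (c s * (-1)^(s+j)) * (2 powr (a+b+1) * Beta (a + real (s+j) + 1) (b + real (k-s) + 1)))) {-1..1}"
    unfolding pt
    by (intro has_integral_sum has_integral_mult_right mono_int a b) simp
  define K where "K = Gamma (real k + a + 1) * Gamma (real k + b + 1) / (fact k * Gamma (a + b + real k + real j + 2))"
  have "(\<Sum>s\<le>k. (c s * (-1)^(s+j)) * (2 powr (a+b+1) * Beta (a + real (s+j) + 1) (b + real (k-s) + 1)))
      = (\<Sum>s\<le>k. ((-1)^j * 2 powr (a+b+1) * K) * ((-1)^s * real (k choose s) * pochhammer (a + real s + 1) j))"
  proof (rule sum.cong[OF refl])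
    fix s assume "s \<in> {..k}"
    then have "c s * Beta (a + real (s+j) + 1) (b + real (k-s) + 1) = K * real (k choose s) * pochhammer (a + real s + 1) j"
      unfolding c_def K_def using c_beta[OF a b, of s k j] by simp
    then show "(c s * (-1)^(s+j)) * (2 powr (a+b+1) * Beta (a + real (s+j) + 1) (b + real (k-s) + 1))
      = ((-1)^j * 2 powr (a+b+1) * K) * ((-1)^s * real (k choose s) * pochhammer (a + real s + 1) j)"
      by (simp add: power_add algebra_simps)
  qed
  also have "\<dots> = ((-1)^j * 2 powr (a+b+1) * K) * (if j = k then (-1)^k * fact k else 0)"
    by (simp only: sum_distrib_left[symmetric] D_lemma[OF j])
  also have "\<dots> = (if j = k then Ek k a b else 0)"
  proof (cases "j = k")
    case True
    have "(-1::real)^k * (-1)^k = 1" by (simp add: power_add[symmetric])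
    moreover have "a + b + real k + real k + 2 = a + b + 2 * real k + 2" by simp
    ultimately show ?thesis using True unfolding K_def Ek_def by (simp add: field_simps)
  qed simp
  finally show ?thesis using hi by simp
qed

definition gco :: "nat \<Rightarrow> real \<Rightarrow> real \<Rightarrow> nat \<Rightarrow> real" where
  "gco k a b m = ((real k + a) gchoose (k - m)) * ((real k + a + b + real m) gchoose m)"

lemma shift_binom:
  fixes t :: real
  assumes "s \<le> k"
  shows "t^s * (t + 1)^(k-s) = (\<Sum>m\<le>k. (if s \<le> m then real ((k-s) choose (m-s)) else 0) * t^m)"
proof -
  have "t^s * (t + 1)^(k-s) = (\<Sum>i\<le>k-s. real ((k-s) choose i) * t^(i+s))"
    by (simp add: binomial_ring sum_distrib_left power_add mult_ac)
  also have "\<dots> = (\<Sum>i\<in>{0+s..(k-s)+s}. real ((k-s) choose (i-s)) * t^i)"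
    by (subst sum.shift_bounds_cl_nat_ivl) (simp add: atLeast0AtMost)
  also have "{0+s..(k-s)+s} = {m\<in>{..k}. s \<le> m}" using assms by auto
  also have "(\<Sum>i\<in>{m\<in>{..k}. s \<le> m}. real ((k-s) choose (i-s)) * t^i)
      = (\<Sum>m\<le>k. (if s \<le> m then real ((k-s) choose (m-s)) else 0) * t^m)"
    by (subst sum.inter_filter) (auto intro!: sum.cong)
  finally show ?thesis .
qed

lemma inner_coeff:
  fixes a b :: real
  assumes "m \<le> k"
  shows "(\<Sum>s\<le>k. ((real k + a) gchoose (k - s)) * ((real k + b) gchoose s) *
            (if s \<le> m then real ((k-s) choose (m-s)) else 0)) = gco k a b m"
proof -
  have "(\<Sum>s\<le>k. ((real k + a) gchoose (k - s)) * ((real k + b) gchoose s) *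
            (if s \<le> m then real ((k-s) choose (m-s)) else 0))
      = (\<Sum>s\<le>m. ((real k + a) gchoose (k - s)) * ((real k + b) gchoose s) * real ((k-s) choose (m-s)))"
    using assms by (intro sum.mono_neutral_cong_right) auto
  also have "\<dots> = (\<Sum>s\<le>m. ((real k + a) gchoose (k - m)) * (((real k + b) gchoose s) * ((a + real m) gchoose (m - s))))"
  proof (rule sum.cong[OF refl])
    fix s assume s: "s \<in> {..m}"
    have "real ((k-s) choose (m-s)) = real ((k-s) choose (k-m))"
      using s assms by (subst binomial_symmetric) (auto simp: diff_diff_eq2)
    also have "\<dots> = (of_nat (k-s) gchoose (k-m))" by (simp add: binomial_gbinomial)
    finally have 1: "real ((k-s) choose (m-s)) = (of_nat (k-s) gchoose (k-m))" .
    have "((real k + a) gchoose (k - s)) * (of_nat (k-s) gchoose (k-m))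
        = ((real k + a) gchoose (k - m)) * ((real k + a - of_nat (k-m)) gchoose ((k-s) - (k-m)))"
      using s assms by (intro gbinomial_trinomial_revision) auto
    also have "real k + a - of_nat (k-m) = a + real m" using assms by (simp add: of_nat_diff)
    also have "(k-s) - (k-m) = m - s" using s assms by auto
    finally have 2: "((real k + a) gchoose (k - s)) * (of_nat (k-s) gchoose (k-m))
        = ((real k + a) gchoose (k - m)) * ((a + real m) gchoose (m - s))" .
    show "((real k + a) gchoose (k - s)) * ((real k + b) gchoose s) * real ((k-s) choose (m-s))
        = ((real k + a) gchoose (k - m)) * (((real k + b) gchoose s) * ((a + real m) gchoose (m - s)))"
      unfolding 1 using 2 by (simp add: mult_ac)
  qed
  also have "\<dots> = ((real k + a) gchoose (k - m)) * ((real k + b + (a + real m)) gchoose m)"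
    by (simp add: sum_distrib_left[symmetric] gbinomial_Vandermonde[symmetric] atLeast0AtMost)
  also have "real k + b + (a + real m) = real k + a + b + real m" by simp
  finally show ?thesis unfolding gco_def .
qed

lemma tbasis:
  "jacobiP k a b x = (\<Sum>m\<le>k. gco k a b m * ((x-1)/2)^m)"
proof -
  define t where "t = (x-1)/2"
  have v: "(x+1)/2 = t + 1" unfolding t_def by (simp add: diff_divide_distrib add_divide_distrib)
  define c where "c s = ((real k + a) gchoose (k - s)) * ((real k + b) gchoose s)" for s
  have "jacobiP k a b x = (\<Sum>s\<le>k. c s * (t^s * (t+1)^(k-s)))"
    unfolding jacobiP_def c_def v t_def[symmetric] by (simp add: mult_ac)
  also have "\<dots> = (\<Sum>s\<le>k. c s * (\<Sum>m\<le>k. (if s \<le> m then real ((k-s) choose (m-s)) else 0) * t^m))"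
    by (intro sum.cong refl, subst shift_binom) auto
  also have "\<dots> = (\<Sum>m\<le>k. (\<Sum>s\<le>k. c s * (if s \<le> m then real ((k-s) choose (m-s)) else 0)) * t^m)"
    unfolding sum_distrib_left sum_distrib_right by (subst sum.swap) (simp add: mult_ac)
  also have "\<dots> = (\<Sum>m\<le>k. gco k a b m * t^m)"
    by (intro sum.cong refl) (simp add: c_def inner_coeff)
  finally show ?thesis unfolding t_def .
qed

lemma jac_deriv:
  "deriv (jacobiP k a b) x = (\<Sum>m\<le>k. gco k a b m * (real m * ((x-1)/2)^(m-1) / 2))"
proof -
  have f: "jacobiP k a b = (\<lambda>x. \<Sum>m\<le>k. gco k a b m * ((x-1)/2)^m)"
    by (rule ext) (rule tbasis)
  have d1: "((\<lambda>x. ((x-1)/2)^m) has_field_derivative real m * ((x-1)/2)^(m-1) / 2) (at x)" for m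
    by (auto intro!: derivative_eq_intros)
  have "((\<lambda>x. \<Sum>m\<le>k. gco k a b m * ((x-1)/2)^m) has_field_derivative
        (\<Sum>m\<le>k. gco k a b m * (real m * ((x-1)/2)^(m-1) / 2))) (at x)"
    by (intro DERIV_sum DERIV_cmult d1)
  then show ?thesis unfolding f by (rule DERIV_imp_deriv)
qed

lemma gco_Gamma:
  fixes a b :: real
  assumes a: "a > 0" and b: "b > 0" and m: "m \<le> k"
  shows "gco k a b m = Gamma (real k + a + 1) * Gamma (real k + a + b + real m + 1)
           / (fact (k-m) * Gamma (a + real m + 1) * fact m * Gamma (real k + a + b + 1))"
proof -
  have g1: "(real k + a) gchoose (k - m) = Gamma (real k + a + 1) / (fact (k-m) * Gamma (a + real m + 1))"
  proof -
    have "(real k + a) gchoose (k - m) = Gamma (real k + a + 1) / (fact (k-m) * Gamma (real k + a - real (k - m) + 1))"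
      by (rule gbinomial_Gamma) (rule pos_not_nonpos_Int, use a in simp)
    also have "real k + a - real (k - m) + 1 = a + real m + 1" using m by (simp add: of_nat_diff)
    finally show ?thesis .
  qed
  have g2: "(real k + a + b + real m) gchoose m = Gamma (real k + a + b + real m + 1) / (fact m * Gamma (real k + a + b + 1))"
  proof -
    have "(real k + a + b + real m) gchoose m = Gamma (real k + a + b + real m + 1) / (fact m * Gamma (real k + a + b + real m - real m + 1))"
      by (rule gbinomial_Gamma) (rule pos_not_nonpos_Int, use a b in simp)
    also have "real k + a + b + real m - real m + 1 = real k + a + b + 1" by simp
    finally show ?thesis .
  qed
  show ?thesis unfolding gco_def g1 g2 by simp
qed

lemma Gs: "(x::real) > 0 \<Longrightarrow> y = x + 1 \<Longrightarrow> Gamma y = x * Gamma x"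
  using Gamma_plus1[OF pos_not_nonpos_Int[of x]] by simp

lemma coef0:
  fixes a b :: real
  shows "- real (Suc n) * ((a - b) - (2 * real (Suc n) + a + b)) * gco (Suc n) a b 0
       = 2 * (real (Suc n) + a) * (real (Suc n) + b) * gco n a b 0"
proof -
  have "real (Suc n) * ((real (Suc n) + a) gchoose (Suc n)) = (real (Suc n) + a) * ((real (Suc n) + a - 1) gchoose n)"
    by (rule gbinomial_absorption)
  moreover have "real (Suc n) + a - 1 = real n + a" by simp
  ultimately have e: "real (Suc n) * ((real (Suc n) + a) gchoose (Suc n)) = (real (Suc n) + a) * ((real n + a) gchoose n)"
    by simp
  have "- real (Suc n) * ((a - b) - (2 * real (Suc n) + a + b)) * gco (Suc n) a b 0
      = 2 * (real (Suc n) + b) * (real (Suc n) * ((real (Suc n) + a) gchoose (Suc n)))"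
    unfolding gco_def by (simp add: algebra_simps)
  also have "\<dots> = 2 * (real (Suc n) + a) * (real (Suc n) + b) * gco n a b 0"
    unfolding e gco_def by (simp add: algebra_simps)
  finally show ?thesis .
qed

lemma ratid:
  fixes a b m d n X1 X2 X3 X4 Fd Fm :: real
  assumes pos: "X1 > 0" "X2 > 0" "X3 > 0" "X4 > 0" "Fd > 0" "Fm > 0" "a > 0" "b > 0" "m \<ge> 0" "d \<ge> 0"
    and nmd: "n = m + d"
  shows "(- 2 * (2 * (1+n) + a + b) * (1+m) - (1+n) * ((a - b) - (2 * (1+n) + a + b)))
            * ((n + a + 1) * X1 * ((n + a + b + m + 2) * X2)
                / (Fd * ((a + m + 1) * X3) * ((1+m) * Fm) * ((n + a + b + 1) * X4)))
         + 2 * (2 * (1+n) + a + b) * ((1+n) - m) * ((n + a + 1) * X1 * X2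
                / (((1+d) * Fd) * X3 * Fm * ((n + a + b + 1) * X4)))
       = 2 * (n + b + 1) * d * (n + a + b + 1) * (n + a + 1) * X1 * X2
          / (Fd * ((a + m + 1) * X3) * ((1+m) * Fm) * ((n + a + b + 1) * X4))"
proof -
  define A where "A = a + m + 1"
  define B where "B = m + d + a + b + 1"
  define C where "C = d + 1"
  define M where "M = m + 1"
  have s: "a = A - M" "m = M - 1" "d = C - 1" "b = B - A - C + 1"
    unfolding A_def B_def C_def M_def by simp_all
  have nz: "A \<noteq> 0" "B \<noteq> 0" "C \<noteq> 0" "M \<noteq> 0" unfolding A_def B_def C_def M_def using pos by auto
  show ?thesis using pos nz unfolding nmd s
    by (simp add: field_simps)
qed

lemma ratid2:
  fixes a b m e n X1 X2 X3 X4 Fe Fm :: real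
  assumes pos: "X1 > 0" "X2 > 0" "X3 > 0" "X4 > 0" "Fe > 0" "Fm > 0" "a > 0" "b > 0" "m \<ge> 0" "e \<ge> 0" "n \<ge> 0"
  shows "2 * (n + b + 1) * (1+e) * (n + a + b + 1) * (n + a + 1) * X1 * X2
          / (((1+e) * Fe) * ((a + m + 1) * X3) * ((1+m) * Fm) * ((n + a + b + 1) * X4))
       = 2 * ((1+n) + a) * ((1+n) + b) * (X1 * X2 / (Fe * ((a + m + 1) * X3) * ((1+m) * Fm) * X4))"
proof -
  define A where "A = a + m + 1"
  define B where "B = n + a + b + 1"
  define C where "C = 1 + e"
  define M where "M = 1 + m"
  have s: "a = A - M" "m = M - 1" "e = C - 1" "b = B - n - A + M - 1"
    unfolding A_def B_def C_def M_def by simp_all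
  have nz: "A \<noteq> 0" "B \<noteq> 0" "C \<noteq> 0" "M \<noteq> 0" unfolding A_def B_def C_def M_def using pos by auto
  show ?thesis using pos nz unfolding s
    by (simp add: field_simps)
qed

lemma coefS:
  fixes a b :: real
  assumes a: "a > 0" and b: "b > 0" and mn: "m \<le> n"
  shows "(- 2 * (2 * real (Suc n) + a + b) * real (Suc m) - real (Suc n) * ((a - b) - (2 * real (Suc n) + a + b)))
            * gco (Suc n) a b (Suc m)
         + 2 * (2 * real (Suc n) + a + b) * (real (Suc n) - real m) * gco (Suc n) a b m
       = (if Suc m \<le> n then 2 * (real (Suc n) + a) * (real (Suc n) + b) * gco n a b (Suc m) else 0)"
proof -
  obtain d where d: "n = m + d" using mn le_Suc_ex by blast
  define X1 where "X1 = Gamma (real n + a + 1)"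
  define X2 where "X2 = Gamma (real n + a + b + real m + 2)"
  define X3 where "X3 = Gamma (a + real m + 1)"
  define X4 where "X4 = Gamma (real n + a + b + 1)"
  have pos: "X1 > 0" "X2 > 0" "X3 > 0" "X4 > 0" unfolding X1_def X2_def X3_def X4_def
    using a b by auto
  have ps: "a + real m + 1 > 0" "real n + a + b + 1 > 0" "real n + a + 1 > 0" "real n + a + b + real m + 2 > 0"
    using a b by auto
  have G1: "Gamma (real (Suc n) + a + 1) = (real n + a + 1) * X1"
    unfolding X1_def using a by (intro Gs) auto
  have G2: "Gamma (real (Suc n) + a + b + real (Suc m) + 1) = (real n + a + b + real m + 2) * X2"
    unfolding X2_def using a b by (intro Gs) auto
  have G2': "Gamma (real (Suc n) + a + b + real m + 1) = X2"
    unfolding X2_def by (rule arg_cong[where f=Gamma]) simp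
  have G3: "Gamma (a + real (Suc m) + 1) = (a + real m + 1) * X3"
    unfolding X3_def using a by (intro Gs) auto
  have G4: "Gamma (real (Suc n) + a + b + 1) = (real n + a + b + 1) * X4"
    unfolding X4_def using a b by (intro Gs) auto
  have nd: "Suc n - Suc m = d" "Suc n - m = Suc d" using d by simp_all
  have e1: "gco (Suc n) a b (Suc m) = (real n + a + 1) * X1 * ((real n + a + b + real m + 2) * X2)
       / (fact d * ((a + real m + 1) * X3) * (real (Suc m) * fact m) * ((real n + a + b + 1) * X4))"
  proof -
    have "gco (Suc n) a b (Suc m) = Gamma (real (Suc n) + a + 1) * Gamma (real (Suc n) + a + b + real (Suc m) + 1)
           / (fact (Suc n - Suc m) * Gamma (a + real (Suc m) + 1) * fact (Suc m) * Gamma (real (Suc n) + a + b + 1))"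
      using mn by (intro gco_Gamma a b) simp
    also have "\<dots> = (real n + a + 1) * X1 * ((real n + a + b + real m + 2) * X2)
       / (fact d * ((a + real m + 1) * X3) * (fact (Suc m)) * ((real n + a + b + 1) * X4))"
      by (simp only: G1 G2 G3 G4 nd)
    finally show ?thesis by simp
  qed
  have e2: "gco (Suc n) a b m = (real n + a + 1) * X1 * X2
       / ((real (Suc d) * fact d) * X3 * fact m * ((real n + a + b + 1) * X4))"
  proof -
    have "gco (Suc n) a b m = Gamma (real (Suc n) + a + 1) * Gamma (real (Suc n) + a + b + real m + 1)
           / (fact (Suc n - m) * Gamma (a + real m + 1) * fact m * Gamma (real (Suc n) + a + b + 1))"
      using mn by (intro gco_Gamma a b) simp
    also have "\<dots> = (real n + a + 1) * X1 * X2
       / (fact (Suc d) * X3 * fact m * ((real n + a + b + 1) * X4))"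
      by (simp only: G1 G2' G4 nd X3_def)
    finally show ?thesis by simp
  qed
  have lhs: "(- 2 * (2 * real (Suc n) + a + b) * real (Suc m) - real (Suc n) * ((a - b) - (2 * real (Suc n) + a + b)))
            * gco (Suc n) a b (Suc m)
         + 2 * (2 * real (Suc n) + a + b) * (real (Suc n) - real m) * gco (Suc n) a b m
       = 2 * (real n + b + 1) * real d * (real n + a + b + 1) * (real n + a + 1) * X1 * X2
          / (fact d * ((a + real m + 1) * X3) * (real (Suc m) * fact m) * ((real n + a + b + 1) * X4))"
    unfolding e1 e2 using ratid[of X1 X2 X3 X4 "fact d" "fact m" a b "real m" "real d" "real n"] pos d a b
    by simp
  show ?thesis
  proof (cases "Suc m \<le> n")
    case False
    then have "d = 0" using d by simp
    then show ?thesis unfolding lhs using False by simp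
  next
    case True
    then obtain e where e: "d = Suc e" using d by (cases d) auto
    have ne: "n - Suc m = e" using d e by simp
    have G2'': "Gamma (real n + a + b + real (Suc m) + 1) = X2" unfolding X2_def
        by (rule arg_cong[where f=Gamma]) simp
    have e3: "gco n a b (Suc m) = X1 * X2 / (fact e * ((a + real m + 1) * X3) * (real (Suc m) * fact m) * X4)"
    proof -
      have "gco n a b (Suc m) = Gamma (real n + a + 1) * Gamma (real n + a + b + real (Suc m) + 1)
           / (fact (n - Suc m) * Gamma (a + real (Suc m) + 1) * fact (Suc m) * Gamma (real n + a + b + 1))"
        using True by (intro gco_Gamma a b) simp
      also have "\<dots> = X1 * X2 / (fact e * ((a + real m + 1) * X3) * fact (Suc m) * X4)"
        by (simp only: G2'' G3 ne X1_def X4_def)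
      finally show ?thesis by simp
    qed
    have fd: "fact d = real (Suc e) * fact e" unfolding e by simp
    show ?thesis unfolding lhs e3 using True pos e a b
      ratid2[of X1 X2 X3 X4 "fact e" "fact m" a b "real m" "real e" "real n"] by simp
  qed
qed

lemma t_deriv_sum:
  fixes t :: real
  shows "t * (\<Sum>m\<le>k. g m * (real m * t^(m-1) / 2)) = (\<Sum>m\<le>k. g m * real m * t^m / 2)"
  unfolding sum_distrib_left
proof (intro sum.cong refl)
  fix m show "t * (g m * (real m * t ^ (m - 1) / 2)) = g m * real m * t ^ m / 2"
    by (cases m) (simp_all add: mult_ac)
qed

lemma Zid:
  fixes a b x :: real
  assumes a: "a > 0" and b: "b > 0"
  shows "(2 * real (Suc n) + a + b) * (1 - x^2) * deriv (jacobiP (Suc n) a b) x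
        - real (Suc n) * ((a - b) - (2 * real (Suc n) + a + b) * x) * jacobiP (Suc n) a b x
        = 2 * (real (Suc n) + a) * (real (Suc n) + b) * jacobiP n a b x"
proof -
  define \<rho> where "\<rho> = 2 * real (Suc n) + a + b"
  define K where "K = real (Suc n)"
  define t where "t = (x-1)/2"
  define g where "g = gco (Suc n) a b"
  define g' where "g' = gco n a b"
  define \<alpha> where "\<alpha> m = (- 2 * \<rho> * real m - K * ((a - b) - \<rho>)) * g m" for m
  define \<beta> where "\<beta> m = 2 * \<rho> * (K - real m) * g m" for m
  define R where "R m = (if m \<le> n then 2 * (K + a) * (K + b) * g' m else 0)" for m
  have y: "jacobiP (Suc n) a b x = (\<Sum>m\<le>Suc n. g m * t^m)"
    unfolding g_def t_def by (rule tbasis)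
  have y0: "jacobiP n a b x = (\<Sum>m\<le>n. g' m * t^m)"
    unfolding g'_def t_def by (rule tbasis)
  have ty': "t * deriv (jacobiP (Suc n) a b) x = (\<Sum>m\<le>Suc n. g m * real m * t^m / 2)"
    unfolding jac_deriv g_def t_def by (rule t_deriv_sum)
  have xt: "x = 2 * t + 1" unfolding t_def by (simp add: diff_divide_distrib)
  have "\<rho> * (1 - x^2) * deriv (jacobiP (Suc n) a b) x - K * ((a - b) - \<rho> * x) * jacobiP (Suc n) a b x
      = \<rho> * (-4 * (t+1)) * (t * deriv (jacobiP (Suc n) a b) x) - K * ((a - b) - \<rho> * (2 * t + 1)) * jacobiP (Suc n) a b x"
    unfolding xt by (simp add: power2_eq_square algebra_simps)
  also have "\<dots> = (\<Sum>m\<le>Suc n. \<rho> * (-4 * (t+1)) * (g m * real m * t^m / 2) - K * ((a - b) - \<rho> * (2 * t + 1)) * (g m * t^m))"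
    unfolding ty' y sum_subtractf sum_distrib_left ..
  also have "\<dots> = (\<Sum>m\<le>Suc n. \<alpha> m * t^m + \<beta> m * t^(Suc m))"
    by (intro sum.cong refl) (simp add: \<alpha>_def \<beta>_def algebra_simps)
  also have "\<dots> = (\<Sum>m\<le>Suc n. \<alpha> m * t^m) + (\<Sum>m\<le>Suc n. \<beta> m * t^(Suc m))"
    by (rule sum.distrib)
  also have "(\<Sum>m\<le>Suc n. \<alpha> m * t^m) = \<alpha> 0 + (\<Sum>m\<le>n. \<alpha> (Suc m) * t^(Suc m))"
    by (subst sum.atMost_Suc_shift) simp
  also have "(\<Sum>m\<le>Suc n. \<beta> m * t^(Suc m)) = (\<Sum>m\<le>n. \<beta> m * t^(Suc m))"
    by (simp add: \<beta>_def K_def)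
  finally have L: "\<rho> * (1 - x^2) * deriv (jacobiP (Suc n) a b) x - K * ((a - b) - \<rho> * x) * jacobiP (Suc n) a b x
      = \<alpha> 0 + (\<Sum>m\<le>n. (\<alpha> (Suc m) + \<beta> m) * t^(Suc m))"
    by (simp add: sum.distrib algebra_simps)
  have "2 * (K + a) * (K + b) * jacobiP n a b x = (\<Sum>m\<le>n. R m * t^m)"
    unfolding y0 sum_distrib_left R_def by (simp add: mult_ac)
  also have "\<dots> = (\<Sum>m\<le>Suc n. R m * t^m)"
    by (simp add: R_def)
  also have "\<dots> = R 0 + (\<Sum>m\<le>n. R (Suc m) * t^(Suc m))"
    by (subst sum.atMost_Suc_shift) simp
  finally have Rr: "2 * (K + a) * (K + b) * jacobiP n a b x = R 0 + (\<Sum>m\<le>n. R (Suc m) * t^(Suc m))" .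
  have c0: "\<alpha> 0 = R 0"
    using coef0[of n a b] unfolding \<alpha>_def R_def g_def g'_def K_def \<rho>_def by (simp add: algebra_simps)
  have cS: "\<alpha> (Suc m) + \<beta> m = R (Suc m)" if "m \<le> n" for m
    using coefS[OF a b that] unfolding \<alpha>_def \<beta>_def R_def g_def g'_def K_def \<rho>_def by simp
  have "\<alpha> 0 + (\<Sum>m\<le>n. (\<alpha> (Suc m) + \<beta> m) * t^(Suc m)) = R 0 + (\<Sum>m\<le>n. R (Suc m) * t^(Suc m))"
    using c0 cS by simp
  then show ?thesis using L Rr unfolding \<rho>_def K_def by simp
qed

lemma momgen:
  fixes a b :: real
  assumes a: "a > 0" and b: "b > 0" and A: "finite A" and j: "\<And>m. m \<in> A \<Longrightarrow> j m \<le> k"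
  shows "((\<lambda>x. jw a b x * jacobiP k a b x * (\<Sum>m\<in>A. q m * ((x-1)/2)^(j m))) has_integral
          (\<Sum>m\<in>A. q m * (if j m = k then Ek k a b else 0))) {-1..1}"
proof -
  have e: "jw a b x * jacobiP k a b x * (\<Sum>m\<in>A. q m * ((x-1)/2)^(j m))
     = (\<Sum>m\<in>A. q m * (jw a b x * jacobiP k a b x * ((x-1)/2)^(j m)))" for x
    by (simp add: sum_distrib_left mult_ac)
  show ?thesis unfolding e
    by (intro has_integral_sum A has_integral_mult_right mom a b j)
qed

lemma gco_top:
  fixes a b :: real
  assumes a: "a > 0" and b: "b > 0"
  shows "gco k a b k = Gamma (2 * real k + a + b + 1) / (fact k * Gamma (real k + a + b + 1))"
proof -
  have "(real k + a + b + real k) gchoose k = Gamma (real k + a + b + real k + 1) / (fact k * Gamma (real k + a + b + real k - real k + 1))"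
    by (rule gbinomial_Gamma) (rule pos_not_nonpos_Int, use a b in simp)
  also have "real k + a + b + real k + 1 = 2 * real k + a + b + 1" by simp
  also have "real k + a + b + real k - real k + 1 = real k + a + b + 1" by simp
  finally show ?thesis unfolding gco_def by simp
qed

lemma fi_abs:
  fixes S D F T P A B :: real
  shows "S \<noteq> 0 \<Longrightarrow> D \<noteq> 0 \<Longrightarrow> F \<noteq> 0 \<Longrightarrow> T \<noteq> 0 \<Longrightarrow>
    S / (F * T) * (P * A * B / (D * S)) = P * A * B / (D * F * T)"
  by (simp add: field_simps)

lemma fii_abs:
  fixes S D2 D3 X X' Y Y' R R1 P A B :: real
  shows "S \<noteq> 0 \<Longrightarrow> D2 \<noteq> 0 \<Longrightarrow> D3 \<noteq> 0 \<Longrightarrow> X = X' \<Longrightarrow> Y = Y' \<Longrightarrow> R = D2 \<Longrightarrow> R1 = D3 \<Longrightarrow>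
    P * A * B / S * (X * Y) = P * (X' * A) * (Y' * B) / (D3 * (D2 * S)) * (R * R1)"
  by (simp add: field_simps)

lemma fiii_abs:
  fixes S T F FS M D1 D1' D2 R R' KK KS :: real
  shows "S \<noteq> 0 \<Longrightarrow> T \<noteq> 0 \<Longrightarrow> F \<noteq> 0 \<Longrightarrow> M \<noteq> 0 \<Longrightarrow> D1' \<noteq> 0 \<Longrightarrow>
    FS = M * F \<Longrightarrow> R = D2 \<Longrightarrow> R' = D1 \<Longrightarrow> KK = M \<Longrightarrow> KS = D1' \<Longrightarrow>
    S / (F * T) * (R * R') = (D2 * (D1 * S)) / (FS * (D1' * T)) * (KK * KS)"
  by (simp add: field_simps)

lemma fact_i:
  fixes a b :: real
  assumes a: "a > 0" and b: "b > 0"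
  shows "gco k a b k * Ek k a b = jacobi_hsq k a b"
proof -
  define S where "S = Gamma (2 * real k + a + b + 1)"
  have S: "Gamma (a + b + 2 * real k + 2) = (2 * real k + a + b + 1) * S"
    unfolding S_def using a b by (intro Gs) auto
  have pos: "S > 0" "Gamma (real k + a + b + 1) > 0" "2 * real k + a + b + 1 > 0" unfolding S_def using a b by auto
  show ?thesis unfolding gco_top[OF a b] Ek_def jacobi_hsq_def S S_def[symmetric]
    by (rule fi_abs) (use pos in auto)
qed

lemma fact_ii:
  fixes a b :: real
  assumes a: "a > 0" and b: "b > 0"
  shows "Ek n a b * ((real (Suc n) + a) * (real (Suc n) + b))
       = Ek (Suc n) a b * ((2 * real (Suc n) + a + b) * (2 * real (Suc n) + a + b + 1))"
proof -
  define A where "A = Gamma (real n + a + 1)"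
  define B where "B = Gamma (real n + b + 1)"
  define S where "S = Gamma (a + b + 2 * real n + 2)"
  have GA: "Gamma (real (Suc n) + a + 1) = (real n + a + 1) * A" unfolding A_def using a by (intro Gs) auto
  have GB: "Gamma (real (Suc n) + b + 1) = (real n + b + 1) * B" unfolding B_def using b by (intro Gs) auto
  have S1: "Gamma (a + b + 2 * real n + 3) = (a + b + 2 * real n + 2) * S" unfolding S_def using a b by (intro Gs) auto
  have GS: "Gamma (a + b + 2 * real (Suc n) + 2) = (a + b + 2 * real n + 3) * ((a + b + 2 * real n + 2) * S)"
    unfolding S1[symmetric] using a b by (intro Gs) auto
  have pos: "S > 0" "A > 0" "B > 0" "a + b + 2 * real n + 2 > 0" "a + b + 2 * real n + 3 > 0"
    unfolding S_def A_def B_def using a b by auto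
  show ?thesis unfolding Ek_def GA GB GS A_def[symmetric] B_def[symmetric] S_def[symmetric]
    by (rule fii_abs) (use pos in auto)
qed

lemma fact_iii:
  fixes a b :: real
  assumes a: "a > 0" and b: "b > 0"
  shows "gco n a b n * ((2 * real (Suc n) + a + b) * (2 * real (Suc n) + a + b - 1))
       = gco (Suc n) a b (Suc n) * (real (Suc n) * (real (Suc n) + a + b))"
proof -
  define S where "S = Gamma (2 * real n + a + b + 1)"
  define T where "T = Gamma (real n + a + b + 1)"
  have S1: "Gamma (2 * real n + a + b + 2) = (2 * real n + a + b + 1) * S" unfolding S_def using a b by (intro Gs) auto
  have GS: "Gamma (2 * real (Suc n) + a + b + 1) = (2 * real n + a + b + 2) * ((2 * real n + a + b + 1) * S)"
    unfolding S1[symmetric] using a b by (intro Gs) auto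
  have GT: "Gamma (real (Suc n) + a + b + 1) = (real n + a + b + 1) * T" unfolding T_def using a b by (intro Gs) auto
  have pos: "S > 0" "T > 0" "2 * real n + a + b + 1 > 0" "2 * real n + a + b + 2 > 0" "real n + a + b + 1 > 0"
    unfolding S_def T_def using a b by auto
  show ?thesis unfolding gco_top[OF a b] GS GT S_def[symmetric] T_def[symmetric]
    by (rule fiii_abs) (use pos in \<open>auto simp: fact_Suc\<close>)
qed

lemma final_alg:
  fixes K a b gk Ek gn En H :: real
  assumes K: "K \<ge> 1" and a: "a > 0" and b: "b > 0"
    and i: "gk * Ek = H"
    and ii: "En * ((K + a) * (K + b)) = Ek * ((2 * K + a + b) * (2 * K + a + b + 1))"
    and iii: "gn * ((2 * K + a + b) * (2 * K + a + b - 1)) = gk * (K * (K + a + b))"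
  shows "(16 * (K + a)^2 * (K + b)^2 * (gn * En) + 2 * (K + a) * (K + b) * (- 8 * (2 * K + a + b)^2 * (gn * Ek))
           + 4 * K * (K + (a+b)) * ((2 * K + a + b)^2 - (a-b)^2) * (gk * Ek)) / (2 * K + a + b)^2
       = ((2 * K + a + b)^2 - (a-b)^2) * ((2 * K + a + b)^2 - (a+b)^2) / ((2 * K + a + b) * ((2 * K + a + b) - 1)) * H"
proof -
  define r where "r = 2 * K + a + b"
  have r: "r * r \<noteq> 0" "r * (r - 1) \<noteq> 0" "(2 * K + a + b)^2 \<noteq> 0" unfolding r_def using K a b by auto
  have num: "(16 * (K + a)^2 * (K + b)^2 * (gn * En) + 2 * (K + a) * (K + b) * (- 8 * (2 * K + a + b)^2 * (gn * Ek))
           + 4 * K * (K + (a+b)) * ((2 * K + a + b)^2 - (a-b)^2) * (gk * Ek)) * ((2 * K + a + b) * ((2 * K + a + b) - 1))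
       = ((2 * K + a + b)^2 - (a-b)^2) * ((2 * K + a + b)^2 - (a+b)^2) * H * (2 * K + a + b)^2"
  proof -
    define r where "r = 2 * K + a + b"
    define p where "p = gn * ((2 * K + a + b) * (2 * K + a + b - 1))"
    define q where "q = En * ((K + a) * (K + b))"
    have "(16 * (K + a)^2 * (K + b)^2 * (gn * En) + 2 * (K + a) * (K + b) * (- 8 * (2 * K + a + b)^2 * (gn * Ek))
           + 4 * K * (K + (a+b)) * ((2 * K + a + b)^2 - (a-b)^2) * (gk * Ek)) * ((2 * K + a + b) * ((2 * K + a + b) - 1))
       = 16 * (K + a) * (K + b) * p * q - 16 * (K + a) * (K + b) * (2 * K + a + b)^2 * p * Ek
         + 4 * K * (K + (a+b)) * ((2 * K + a + b)^2 - (a-b)^2) * (gk * Ek) * ((2 * K + a + b) * ((2 * K + a + b) - 1))"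
      unfolding p_def q_def by algebra
    also have "\<dots> = 16 * (K + a) * (K + b) * (gk * (K * (K + a + b))) * (Ek * ((2 * K + a + b) * (2 * K + a + b + 1)))
         - 16 * (K + a) * (K + b) * (2 * K + a + b)^2 * (gk * (K * (K + a + b))) * Ek
         + 4 * K * (K + (a+b)) * ((2 * K + a + b)^2 - (a-b)^2) * (gk * Ek) * ((2 * K + a + b) * ((2 * K + a + b) - 1))"
      unfolding p_def q_def ii iii ..
    also have "\<dots> = ((2 * K + a + b)^2 - (a-b)^2) * ((2 * K + a + b)^2 - (a+b)^2) * (gk * Ek) * (2 * K + a + b)^2"
      by algebra
    finally show ?thesis unfolding i .
  qed
  have rr: "((2 * K + a + b) * ((2 * K + a + b) - 1)) \<noteq> 0" using r unfolding r_def by simp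
  show ?thesis
    unfolding times_divide_eq_left
    by (subst frac_eq_eq[OF r(3) rr]) (rule num)
qed

lemma Wid:
  fixes K a b x y y' :: real
  defines "\<rho> \<equiv> 2 * K + a + b"
  shows "\<rho>^2 * ((1 - x) * (1 + x)) * ((\<rho>^2 - (a+b)^2) * y^2 - 4 * ((a-b) + (a+b) * x) * y * y' + 4 * (1 - x^2) * y'^2)
     = 4 * (\<rho> * (1 - x^2) * y' - K * ((a - b) - \<rho> * x) * y)^2
       + (- 4 * (a+b) * (a-b) - 4 * \<rho>^2 * x) * y * (\<rho> * (1 - x^2) * y' - K * ((a - b) - \<rho> * x) * y)
       + 4 * K * (K + (a+b)) * (\<rho>^2 - (a-b)^2) * y^2"
  unfolding \<rho>_def by algebra


theorem lemma6:
  fixes k :: nat and \<alpha> \<beta> :: real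
  assumes "k \<ge> 1" and "\<alpha> > \<beta>" and "\<beta> > 0"
  shows "integral {-1..1}
           (\<lambda>x. (1 - x) powr (\<alpha> + 1) * (1 + x) powr (\<beta> + 1) * jacobiW k \<alpha> \<beta> x)
         = (let \<eta> = \<alpha> - \<beta>; \<sigma> = \<alpha> + \<beta>; \<rho> = 2 * real k + \<alpha> + \<beta>
            in (\<rho>^2 - \<eta>^2) * (\<rho>^2 - \<sigma>^2) / (\<rho> * (\<rho> - 1)) * jacobi_hsq k \<alpha> \<beta>)"
proof -
  obtain n where kn: "k = Suc n" using assms(1) by (cases k) auto
  have a: "\<alpha> > 0" and b: "\<beta> > 0" using assms by auto
  define K where "K = real (Suc n)"
  define \<rho> where "\<rho> = 2 * K + \<alpha> + \<beta>"
  define g where "g = gco (Suc n) \<alpha> \<beta>"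
  define g' where "g' = gco n \<alpha> \<beta>"
  define c1 where "c1 = - 4 * (\<alpha> + \<beta>) * (\<alpha> - \<beta>) - 4 * \<rho>^2"
  define c2 where "c2 = - 8 * \<rho>^2"
  define C1 where "C1 = 16 * (K + \<alpha>)^2 * (K + \<beta>)^2"
  define C2 where "C2 = 2 * (K + \<alpha>) * (K + \<beta>)"
  define C3 where "C3 = 4 * K * (K + (\<alpha> + \<beta>)) * (\<rho>^2 - (\<alpha> - \<beta>)^2)"
  define F1 where "F1 x = jw \<alpha> \<beta> x * jacobiP n \<alpha> \<beta> x * (\<Sum>m\<le>n. g' m * ((x-1)/2)^m)" for x
  define F2 where "F2 x = jw \<alpha> \<beta> x * jacobiP (Suc n) \<alpha> \<beta> x * (\<Sum>m\<le>n. (c1 * g' m) * ((x-1)/2)^m)" for x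
  define F3 where "F3 x = jw \<alpha> \<beta> x * jacobiP (Suc n) \<alpha> \<beta> x * (\<Sum>m\<le>n. (c2 * g' m) * ((x-1)/2)^(Suc m))" for x
  define F4 where "F4 x = jw \<alpha> \<beta> x * jacobiP (Suc n) \<alpha> \<beta> x * (\<Sum>m\<le>Suc n. g m * ((x-1)/2)^m)" for x
  have I1: "(F1 has_integral (g' n * Ek n \<alpha> \<beta>)) {-1..1}"
  proof -
    have "(F1 has_integral (\<Sum>m\<le>n. g' m * (if m = n then Ek n \<alpha> \<beta> else 0))) {-1..1}"
      unfolding F1_def by (rule momgen[OF a b, where j="\<lambda>m. m" and q="g'"]) auto
    moreover have "(\<Sum>m\<le>n. g' m * (if m = n then Ek n \<alpha> \<beta> else 0)) = g' n * Ek n \<alpha> \<beta>"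
      by (simp add: if_distrib cong: if_cong)
    ultimately show ?thesis by simp
  qed
  have I2: "(F2 has_integral 0) {-1..1}"
  proof -
    have "(F2 has_integral (\<Sum>m\<le>n. (c1 * g' m) * (if m = Suc n then Ek (Suc n) \<alpha> \<beta> else 0))) {-1..1}"
      unfolding F2_def by (rule momgen[OF a b, where j="\<lambda>m. m" and q="\<lambda>m. c1 * g' m"]) auto
    then show ?thesis by simp
  qed
  have I3: "(F3 has_integral (c2 * g' n * Ek (Suc n) \<alpha> \<beta>)) {-1..1}"
  proof -
    have "(F3 has_integral (\<Sum>m\<le>n. (c2 * g' m) * (if Suc m = Suc n then Ek (Suc n) \<alpha> \<beta> else 0))) {-1..1}"
      unfolding F3_def by (rule momgen[OF a b, where j="\<lambda>m. Suc m" and q="\<lambda>m. c2 * g' m"]) auto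
    moreover have "(\<Sum>m\<le>n. (c2 * g' m) * (if Suc m = Suc n then Ek (Suc n) \<alpha> \<beta> else 0)) = c2 * g' n * Ek (Suc n) \<alpha> \<beta>"
      by (simp add: if_distrib cong: if_cong)
    ultimately show ?thesis by simp
  qed
  have I4: "(F4 has_integral (g (Suc n) * Ek (Suc n) \<alpha> \<beta>)) {-1..1}"
  proof -
    have "(F4 has_integral (\<Sum>m\<le>Suc n. g m * (if m = Suc n then Ek (Suc n) \<alpha> \<beta> else 0))) {-1..1}"
      unfolding F4_def by (rule momgen[OF a b, where j="\<lambda>m. m" and q="g"]) auto
    moreover have "(\<Sum>m\<le>Suc n. g m * (if m = Suc n then Ek (Suc n) \<alpha> \<beta> else 0)) = g (Suc n) * Ek (Suc n) \<alpha> \<beta>"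
      by (simp add: if_distrib cong: if_cong)
    ultimately show ?thesis by simp
  qed
  define V where "V = (C1 * (g' n * Ek n \<alpha> \<beta>) + C2 * (0 + c2 * g' n * Ek (Suc n) \<alpha> \<beta>) + C3 * (g (Suc n) * Ek (Suc n) \<alpha> \<beta>)) / \<rho>^2"
  have IF: "((\<lambda>x. (C1 * F1 x + C2 * (F2 x + F3 x) + C3 * F4 x) / \<rho>^2) has_integral V) {-1..1}"
    unfolding V_def
    by (intro has_integral_divide has_integral_add has_integral_mult_right I1 I2 I3 I4)
  have pt: "(1 - x) powr (\<alpha> + 1) * (1 + x) powr (\<beta> + 1) * jacobiW k \<alpha> \<beta> x
      = (C1 * F1 x + C2 * (F2 x + F3 x) + C3 * F4 x) / \<rho>^2" if x: "x \<in> {-1..1}" for x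
  proof -
    define t where "t = (x-1)/2"
    define y where "y = jacobiP (Suc n) \<alpha> \<beta> x"
    define y' where "y' = deriv (jacobiP (Suc n) \<alpha> \<beta>) x"
    define P where "P = jacobiP n \<alpha> \<beta> x"
    define Wv where "Wv = jacobiW k \<alpha> \<beta> x"
    have xt: "x = 2 * t + 1" unfolding t_def by (simp add: diff_divide_distrib)
    have sP: "(\<Sum>m\<le>n. g' m * ((x-1)/2)^m) = P" unfolding P_def g'_def by (rule tbasis[symmetric])
    have sP1: "(\<Sum>m\<le>n. (c1 * g' m) * ((x-1)/2)^m) = c1 * P"
      unfolding sP[symmetric] sum_distrib_left by (simp add: mult_ac)
    have sP2: "(\<Sum>m\<le>n. (c2 * g' m) * ((x-1)/2)^(Suc m)) = c2 * t * P"
      unfolding sP[symmetric] sum_distrib_left t_def by (simp add: mult_ac)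
    have sy: "(\<Sum>m\<le>Suc n. g m * ((x-1)/2)^m) = y" unfolding y_def g_def by (rule tbasis[symmetric])
    have rhs: "C1 * F1 x + C2 * (F2 x + F3 x) + C3 * F4 x
        = jw \<alpha> \<beta> x * (C1 * P^2 + C2 * y * (c1 + c2 * t) * P + C3 * y^2)"
      unfolding F1_def F2_def F3_def F4_def sP sP1 sP2 sy y_def[symmetric] P_def[symmetric]
      by (simp add: algebra_simps power2_eq_square)
    have Z: "\<rho> * (1 - x^2) * y' - K * ((\<alpha> - \<beta>) - \<rho> * x) * y = C2 * P"
      unfolding \<rho>_def K_def y_def y'_def P_def C2_def K_def using Zid[OF a b, of n x] by simp
    have Wdef: "Wv = (\<rho>^2 - (\<alpha>+\<beta>)^2) * y^2 - 4 * ((\<alpha>-\<beta>) + (\<alpha>+\<beta>) * x) * y * y' + 4 * (1 - x^2) * y'^2"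
      unfolding Wv_def jacobiW_def Let_def y_def y'_def \<rho>_def K_def kn by simp
    have W: "\<rho>^2 * ((1 - x) * (1 + x)) * Wv
        = 4 * (C2 * P)^2 + (- 4 * (\<alpha>+\<beta>) * (\<alpha>-\<beta>) - 4 * \<rho>^2 * x) * y * (C2 * P)
          + 4 * K * (K + (\<alpha>+\<beta>)) * (\<rho>^2 - (\<alpha>-\<beta>)^2) * y^2"
      unfolding Wdef Z[symmetric] \<rho>_def by (rule Wid)
    have W2: "\<rho>^2 * ((1 - x) * (1 + x) * Wv) = C1 * P^2 + C2 * y * (c1 + c2 * t) * P + C3 * y^2"
    proof -
      have "\<rho>^2 * ((1 - x) * (1 + x) * Wv) = 4 * (C2 * P)^2 + (- 4 * (\<alpha>+\<beta>) * (\<alpha>-\<beta>) - 4 * \<rho>^2 * x) * y * (C2 * P)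
          + 4 * K * (K + (\<alpha>+\<beta>)) * (\<rho>^2 - (\<alpha>-\<beta>)^2) * y^2"
        using W by (simp add: mult_ac)
      also have "\<dots> = C1 * P^2 + C2 * y * (c1 + c2 * t) * P + C3 * y^2"
        unfolding C1_def C2_def C3_def c1_def c2_def xt by algebra
      finally show ?thesis .
    qed
    have pw: "(1 - x) powr (\<alpha> + 1) * (1 + x) powr (\<beta> + 1) = jw \<alpha> \<beta> x * ((1 - x) * (1 + x))"
    proof -
      have "(1 - x) powr (\<alpha> + 1) = (1 - x) powr \<alpha> * (1 - x)" using x by (simp add: powr_add powr_one)
      moreover have "(1 + x) powr (\<beta> + 1) = (1 + x) powr \<beta> * (1 + x)" using x by (simp add: powr_add powr_one)
      ultimately show ?thesis unfolding jw_def by (simp add: mult_ac)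
    qed
    have r0: "\<rho>^2 \<noteq> 0" unfolding \<rho>_def K_def using a b by simp
    have "(1 - x) powr (\<alpha> + 1) * (1 + x) powr (\<beta> + 1) * jacobiW k \<alpha> \<beta> x
        = jw \<alpha> \<beta> x * ((1 - x) * (1 + x) * Wv)" unfolding pw Wv_def by (simp add: mult_ac)
    also have "\<dots> = jw \<alpha> \<beta> x * (\<rho>^2 * ((1 - x) * (1 + x) * Wv)) / \<rho>^2" using r0 by simp
    also have "\<dots> = (C1 * F1 x + C2 * (F2 x + F3 x) + C3 * F4 x) / \<rho>^2" unfolding W2 rhs ..
    finally show ?thesis .
  qed
  have "integral {-1..1} (\<lambda>x. (1 - x) powr (\<alpha> + 1) * (1 + x) powr (\<beta> + 1) * jacobiW k \<alpha> \<beta> x) = V"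
  proof -
    have "((\<lambda>x. (1 - x) powr (\<alpha> + 1) * (1 + x) powr (\<beta> + 1) * jacobiW k \<alpha> \<beta> x) has_integral V) {-1..1}"
      using IF by (rule has_integral_eq[rotated]) (use pt in auto)
    then show ?thesis by (rule integral_unique)
  qed
  also have "V = (\<rho>^2 - (\<alpha> - \<beta>)^2) * (\<rho>^2 - (\<alpha> + \<beta>)^2) / (\<rho> * (\<rho> - 1)) * jacobi_hsq (Suc n) \<alpha> \<beta>"
  proof -
    have K1: "K \<ge> 1" unfolding K_def by simp
    have i: "g (Suc n) * Ek (Suc n) \<alpha> \<beta> = jacobi_hsq (Suc n) \<alpha> \<beta>"
      unfolding g_def by (rule fact_i[OF a b])
    have ii: "Ek n \<alpha> \<beta> * ((K + \<alpha>) * (K + \<beta>)) = Ek (Suc n) \<alpha> \<beta> * ((2 * K + \<alpha> + \<beta>) * (2 * K + \<alpha> + \<beta> + 1))"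
      unfolding K_def by (rule fact_ii[OF a b])
    have iii: "g' n * ((2 * K + \<alpha> + \<beta>) * (2 * K + \<alpha> + \<beta> - 1)) = g (Suc n) * (K * (K + \<alpha> + \<beta>))"
      unfolding K_def g_def g'_def by (rule fact_iii[OF a b])
    have "V = (16 * (K + \<alpha>)^2 * (K + \<beta>)^2 * (g' n * Ek n \<alpha> \<beta>) + 2 * (K + \<alpha>) * (K + \<beta>) * (- 8 * (2 * K + \<alpha> + \<beta>)^2 * (g' n * Ek (Suc n) \<alpha> \<beta>))
           + 4 * K * (K + (\<alpha>+\<beta>)) * ((2 * K + \<alpha> + \<beta>)^2 - (\<alpha>-\<beta>)^2) * (g (Suc n) * Ek (Suc n) \<alpha> \<beta>)) / (2 * K + \<alpha> + \<beta>)^2"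
      unfolding V_def C1_def C2_def C3_def c2_def \<rho>_def by (simp add: mult_ac)
    also have "\<dots> = ((2 * K + \<alpha> + \<beta>)^2 - (\<alpha>-\<beta>)^2) * ((2 * K + \<alpha> + \<beta>)^2 - (\<alpha>+\<beta>)^2) / ((2 * K + \<alpha> + \<beta>) * ((2 * K + \<alpha> + \<beta>) - 1)) * jacobi_hsq (Suc n) \<alpha> \<beta>"
      by (rule final_alg[OF K1 a b i ii iii])
    finally show ?thesis unfolding \<rho>_def .
  qed
  finally show ?thesis unfolding kn \<rho>_def K_def Let_def by simp
qed

end
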